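(* Let $n\ge 7$ and let $T_n^1(3,3)$ be the graph obtained from two vertex-disjoint triangles $v_1v_2v_3$ and $w_1w_2w_3$ joined by the edge $v_3w_1$, by attaching $n-6$ pendant edges (new leaves) to $v_3$. Then \[ \operatorname{avm}(T_n^1(3,3))=3-\frac{6}{3n-11}. \]
   Context: $\operatorname{avm}(G)$ is the average of $|M|$ over all maximal matchings $M$ of $G$ (a matching is maximal if not properly contained in another matching). *)

theory Defs
  imports Complex_Main
begin

text \<open>A simple graph is given by its edge set: a set of 2-element vertex sets.\<close>

definition matching :: "'a set set \<Rightarrow> 'a set set \<Rightarrow> bool" where
  "matching E M \<longleftrightarrow> M \<subseteq> E \<and> (\<forall>e\<in>M. \<forall>f\<in>M. e \<noteq> f \<longrightarrow> e \<inter> f = {})"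

definition maximal_matching :: "'a set set \<Rightarrow> 'a set set \<Rightarrow> bool" where
  "maximal_matching E M \<longleftrightarrow> matching E M \<and> \<not> (\<exists>M'. matching E M' \<and> M \<subset> M')"

definition avm :: "'a set set \<Rightarrow> real" where
  "avm E = (\<Sum>M\<in>{M. maximal_matching E M}. real (card M)) / real (card {M. maximal_matching E M})"

text \<open>T_n^1(3,3) on vertices 1..n: v1=1, v2=2, v3=3, w1=4, w2=5, w3=6,
  leaves 7..n attached to v3.\<close>

definition T1_33 :: "nat \<Rightarrow> nat set set" where
  "T1_33 n = {{1,2},{2,3},{1,3},{4,5},{5,6},{4,6},{3,4}} \<union> {{3,k} | k. 7 \<le> k \<and> k \<le> n}"

end

theory Submission imports Defs begin

lemma memE: "e \<in> T1_33 n \<longleftrightarrow> e={1,2} \<or> e={2,3} \<or> e={1,3} \<or> e={4,5} \<or> e={5,6} \<or> e={4,6} \<or> e={3,4} \<or> (\<exists>k. e={3,k} \<and> 7\<le>k \<and> k\<le>n)"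
  unfolding T1_33_def Un_iff insert_iff mem_Collect_eq empty_iff by (simp only: disj_assoc simp_thms)

lemma maxI: assumes "matching E M" "\<forall>e\<in>E. e \<inter> \<Union>M \<noteq> {}" shows "maximal_matching E M"
  unfolding maximal_matching_def
proof (intro conjI notI)
  show "matching E M" by fact
  assume "\<exists>M'. matching E M' \<and> M \<subset> M'"
  then obtain M' where m': "matching E M'" "M \<subset> M'" by blast
  then obtain e where e: "e \<in> M'" "e \<notin> M" by blast
  then have "e \<in> E" using m' unfolding matching_def by blast
  then obtain f where f: "f \<in> M" "e \<inter> f \<noteq> {}" using assms(2) by blast
  then have "f \<in> M'" "f \<noteq> e" using m' e by auto
  then show False using m'(1) e(1) f(2) unfolding matching_def by blast
qed

lemma covI: assumes "3\<in>U" "1\<in>U\<or>2\<in>U" "4\<in>U\<or>5\<in>U" "5\<in>U\<or>6\<in>U" "4\<in>U\<or>6\<in>U"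
  shows "\<forall>e\<in>T1_33 n. e \<inter> U \<noteq> {}"
proof
  fix e assume "e \<in> T1_33 n"
  then show "e \<inter> U \<noteq> {}" unfolding memE using assms by (elim disjE exE conjE; simp)
qed

lemma match2: "a \<in> E \<Longrightarrow> b \<in> E \<Longrightarrow> a \<inter> b = {} \<Longrightarrow> matching E {a,b}"
  unfolding matching_def by auto
lemma match3: "a \<in> E \<Longrightarrow> b \<in> E \<Longrightarrow> c \<in> E \<Longrightarrow> a \<inter> b = {} \<Longrightarrow> a \<inter> c = {} \<Longrightarrow> b \<inter> c = {} \<Longrightarrow> matching E {a,b,c}"
  unfolding matching_def by auto

definition T2 :: "nat set set" where "T2 = {{4,5},{5,6},{4,6}}"

lemma m1: "maximal_matching (T1_33 n) {{3,4},{1,2},{5,6}}"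
  by (rule maxI[OF match3 covI]) (simp_all add: memE)

lemma m2: assumes "a \<in> {1,2}" "e \<in> T2" shows "maximal_matching (T1_33 n) {{a,3},e}"
proof -
  have "a = 1 \<or> a = 2" "e = {4,5} \<or> e = {5,6} \<or> e = {4,6}" using assms unfolding T2_def by auto
  then show ?thesis
    apply (elim disjE)
    apply (simp_all only:)
    apply (rule maxI[OF match2 covI]; simp add: memE)+
    done
qed

lemma m3: assumes "k \<in> {7..n}" "e \<in> T2" shows "maximal_matching (T1_33 n) {{3,k},{1,2},e}"
proof -
  have k: "k \<ge> 7" "k \<le> n" using assms by auto
  have kE: "{3,k} \<in> T1_33 n" using k unfolding memE by blast
  have "e = {4,5} \<or> e = {5,6} \<or> e = {4,6}" using assms unfolding T2_def by auto
  then show ?thesis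
    apply (elim disjE)
    apply (simp_all only:)
    apply (rule maxI[OF match3 covI]; use k kE in \<open>simp add: memE\<close>)+
    done
qed

lemma maxD: assumes "maximal_matching E M" "e\<in>E" "e\<noteq>{}" shows "\<exists>f\<in>M. e\<inter>f\<noteq>{}"
proof (rule ccontr)
  assume a: "\<not> ?thesis"
  then have "e \<notin> M" using assms(3) by auto
  moreover have "matching E (insert e M)" using assms a unfolding maximal_matching_def matching_def
    by (auto simp: Int_commute)
  ultimately show False using assms(1) unfolding maximal_matching_def by blast
qed

definition S :: "nat \<Rightarrow> nat set set set" where
 "S n = {{{3,4},{1,2},{5,6}}} \<union> (\<lambda>(a,e). {{a,3},e}) ` ({1,2}\<times>T2) \<union> (\<lambda>(k,e). {{3,k},{1,2},e}) ` ({7..n}\<times>T2)"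

lemma S_max: assumes "M \<in> S n" shows "maximal_matching (T1_33 n) M"
  using assms unfolding S_def
  apply (elim UnE imageE SigmaE singletonE)
    apply (simp_all only: prod.case)
    apply (rule m1)
   apply (rule m2; assumption)
  apply (rule m3; assumption)
  done

lemma dA: assumes "e \<in> T1_33 n" "a \<in> {1,2}" "e \<inter> {a,3} = {}" shows "e \<in> T2"
proof -
  have "a = 1 \<or> a = 2" using assms(2) by simp
  then show ?thesis using assms(1,3) unfolding memE T2_def by (elim disjE exE conjE; simp)
qed
lemma dB: "e \<in> T1_33 n \<Longrightarrow> e \<inter> {3,4} = {} \<Longrightarrow> e = {1,2} \<or> e = {5,6}"
  unfolding memE by (elim disjE exE conjE; simp)
lemma dC: "e \<in> T1_33 n \<Longrightarrow> 7 \<le> k \<Longrightarrow> e \<inter> {3,k} = {} \<Longrightarrow> e = {1,2} \<or> e \<in> T2"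
  unfolding memE T2_def by (elim disjE exE conjE; simp)
lemma T2i: "e \<in> T2 \<Longrightarrow> g \<in> T2 \<Longrightarrow> e \<inter> g = {} \<Longrightarrow> False"
  unfolding T2_def by (elim insertE emptyE; simp)
lemma T2n: "e \<in> T2 \<Longrightarrow> e \<inter> {1,2} = {}" "e \<in> T2 \<Longrightarrow> e \<inter> {3} = {}"
  unfolding T2_def by (elim insertE emptyE; simp)+

lemma inS1: "{{3,4},{1,2},{5,6}} \<in> S n"
  unfolding S_def by (rule UnI1, rule UnI1, rule singletonI)
lemma inS2: "a \<in> {1,2} \<Longrightarrow> g \<in> T2 \<Longrightarrow> {{a,3},g} \<in> S n"
  unfolding S_def by (rule UnI1, rule UnI2, rule image_eqI[where x="(a,g)"]) simp_all
lemma inS3: "k \<in> {7..n} \<Longrightarrow> g \<in> T2 \<Longrightarrow> {{3,k},{1,2},g} \<in> S n"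
  unfolding S_def by (rule UnI2, rule image_eqI[where x="(k,g)"]) simp_all

lemma neE: "e \<in> T1_33 n \<Longrightarrow> e \<noteq> {}"
  unfolding memE by (elim disjE exE conjE; simp)

lemma max_S: assumes n: "n \<ge> 7" and mm: "maximal_matching (T1_33 n) M" shows "M \<in> S n"
proof -
  let ?E = "T1_33 n"
  have sub: "\<And>g. g \<in> M \<Longrightarrow> g \<in> ?E" using mm unfolding maximal_matching_def matching_def by blast
  have disj: "\<And>g h. g \<in> M \<Longrightarrow> h \<in> M \<Longrightarrow> g \<noteq> h \<Longrightarrow> g \<inter> h = {}"
    using mm unfolding maximal_matching_def matching_def by blast
  have cov: "\<And>e. e \<in> ?E \<Longrightarrow> \<exists>f\<in>M. e \<inter> f \<noteq> {}"
    using maxD[OF mm] neE by blast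
  have "{3,n} \<in> ?E" unfolding T1_33_def using n by blast
  then obtain f where fM: "f \<in> M" and fi: "{3,n} \<inter> f \<noteq> {}" using cov by blast
  have fE: "f \<in> ?E" using sub fM by blast
  have oth: "\<And>h. h \<in> M \<Longrightarrow> h \<noteq> f \<Longrightarrow> h \<inter> f = {} \<and> h \<in> ?E" using disj fM sub by blast
  have E12: "{1,2} \<in> ?E" "{4,5} \<in> ?E" "{5,6} \<in> ?E" unfolding T1_33_def by blast+
  { fix a assume a: "a \<in> {1,2}" and f: "f = {a,3}"
    have a': "a = 1 \<or> a = 2" using a by simp
    obtain g where gM: "g \<in> M" and gi: "{4,5} \<inter> g \<noteq> {}" using cov[OF E12(2)] by blast
    have "g \<noteq> f" using gi f a' by (elim disjE; auto)
    then have "g \<inter> f = {}" "g \<in> ?E" using oth[OF gM] by auto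
    then have gT: "g \<in> T2" using dA[of g n a] a f by simp
    have "M = {f, g}"
    proof (intro equalityI subsetI)
      fix h assume hM: "h \<in> M"
      show "h \<in> {f,g}"
      proof (rule ccontr)
        assume "h \<notin> {f,g}"
        then have "h \<noteq> f" "h \<noteq> g" by simp_all
        then have "h \<inter> f = {}" "h \<in> ?E" "h \<inter> g = {}" using oth[OF hM] disj[OF hM gM] by auto
        then have "h \<in> T2" using dA[of h n a] a f by simp
        then show False using T2i gT \<open>h \<inter> g = {}\<close> by blast
      qed
    next
      fix h assume "h \<in> {f,g}" then show "h \<in> M" using fM gM by blast
    qed
    then have "M \<in> S n" using inS2[OF a gT] f by simp
  } note caseA = this
  { assume f: "f = {3,4}"
    obtain g where gM: "g \<in> M" and gi: "{1,2} \<inter> g \<noteq> {}" using cov[OF E12(1)] by blast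
    have "g \<noteq> f" using gi f by auto
    then have "g \<inter> f = {}" "g \<in> ?E" using oth[OF gM] by auto
    then have "g = {1,2} \<or> g = {5,6}" using dB f by simp
    then have g: "g = {1,2}" using gi by auto
    obtain g' where gM': "g' \<in> M" and gi': "{5,6} \<inter> g' \<noteq> {}" using cov[OF E12(3)] by blast
    have "g' \<noteq> f" using gi' f by auto
    then have "g' \<inter> f = {}" "g' \<in> ?E" using oth[OF gM'] by auto
    then have "g' = {1,2} \<or> g' = {5,6}" using dB f by simp
    then have g': "g' = {5,6}" using gi' by auto
    have "M = {f, g, g'}"
    proof (intro equalityI subsetI)
      fix h assume hM: "h \<in> M"
      show "h \<in> {f,g,g'}"
      proof (rule ccontr)
        assume "h \<notin> {f,g,g'}"
        then have "h \<noteq> f" "h \<noteq> g" "h \<noteq> g'" by simp_all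
        then have "h \<inter> f = {}" "h \<in> ?E" using oth[OF hM] by auto
        then have "h = {1,2} \<or> h = {5,6}" using dB f by simp
        then show False using \<open>h \<noteq> g\<close> \<open>h \<noteq> g'\<close> g g' by blast
      qed
    next
      fix h assume "h \<in> {f,g,g'}" then show "h \<in> M" using fM gM gM' by blast
    qed
    then have "M \<in> S n" using inS1 f g g' by simp
  } note caseB = this
  { fix k assume k: "7 \<le> k" "k \<le> n" and f: "f = {3,k}"
    obtain g where gM: "g \<in> M" and gi: "{1,2} \<inter> g \<noteq> {}" using cov[OF E12(1)] by blast
    have "g \<noteq> f" using gi f k by auto
    then have "g \<inter> f = {}" "g \<in> ?E" using oth[OF gM] by auto
    then have "g = {1,2} \<or> g \<in> T2" using dC[of g n k] f k by simp
    then have g: "g = {1,2}" using gi T2n(1)[of g] by (auto simp: Int_commute)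
    obtain g' where gM': "g' \<in> M" and gi': "{4,5} \<inter> g' \<noteq> {}" using cov[OF E12(2)] by blast
    have "g' \<noteq> f" using gi' f k by auto
    moreover have "g' \<noteq> g" using gi' g by auto
    ultimately have "g' \<inter> f = {}" "g' \<in> ?E" using oth[OF gM'] by auto
    then have "g' = {1,2} \<or> g' \<in> T2" using dC[of g' n k] f k by simp
    then have g'T: "g' \<in> T2" using \<open>g' \<noteq> g\<close> g by blast
    have "M = {f, g, g'}"
    proof (intro equalityI subsetI)
      fix h assume hM: "h \<in> M"
      show "h \<in> {f,g,g'}"
      proof (rule ccontr)
        assume "h \<notin> {f,g,g'}"
        then have "h \<noteq> f" "h \<noteq> g" "h \<noteq> g'" by simp_all
        then have "h \<inter> f = {}" "h \<in> ?E" "h \<inter> g' = {}" using oth[OF hM] disj[OF hM gM'] by auto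
        then have "h = {1,2} \<or> h \<in> T2" using dC[of h n k] f k by simp
        then show False using \<open>h \<noteq> g\<close> g T2i g'T \<open>h \<inter> g' = {}\<close> by blast
      qed
    next
      fix h assume "h \<in> {f,g,g'}" then show "h \<in> M" using fM gM gM' by blast
    qed
    then have "M \<in> S n" using inS3[of k n g'] k g'T f g by simp
  } note caseC = this
  from fE show ?thesis unfolding memE
  proof (elim disjE exE conjE)
    assume "f = {1,2}" then show ?thesis using fi n by simp
  next
    assume "f = {2,3}" then show ?thesis using caseA[of 2] by simp
  next
    assume "f = {1,3}" then show ?thesis using caseA[of 1] by simp
  next
    assume "f = {4,5}" then show ?thesis using fi n by simp
  next
    assume "f = {5,6}" then show ?thesis using fi n by simp
  next
    assume "f = {4,6}" then show ?thesis using fi n by simp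
  next
    assume "f = {3,4}" then show ?thesis using caseB by simp
  next
    fix k assume "f = {3,k}" "7 \<le> k" "k \<le> n" then show ?thesis using caseC by simp
  qed
qed

lemma T2_3: "e \<in> T2 \<Longrightarrow> 3 \<notin> e" "e \<in> T2 \<Longrightarrow> e \<noteq> {1,2}" "e \<in> T2 \<Longrightarrow> e \<noteq> {3,4}"
  unfolding T2_def by (auto simp: doubleton_eq_iff)
lemma cardT2: "card T2 = 3" unfolding T2_def by (simp add: doubleton_eq_iff)
lemma finT2: "finite T2" unfolding T2_def by simp

lemma injB: "inj_on (\<lambda>(a,e). {{a,3},e}) ({1,2}\<times>T2)"
proof (rule inj_onI, clarify)
  fix a e a' e' assume a: "a \<in> {1::nat,2}" "e \<in> T2" "a' \<in> {1::nat,2}" "e' \<in> T2" and eq: "{{a,3},e} = {{a',3},e'}"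
  have n3: "3 \<notin> e" "3 \<notin> e'" using a T2_3(1) by auto
  have "{a,3} \<in> {{a',3},e'}" unfolding eq[symmetric] by simp
  moreover have "{a,3} \<noteq> e'" using n3 by auto
  ultimately have "{a,3} = {a',3}" by simp
  then have "a \<in> {a',3}" by (metis insertI1)
  then have "a = a'" using a(1) by auto
  moreover have "e \<in> {{a',3},e'}" unfolding eq[symmetric] by simp
  moreover have "e \<noteq> {a',3}" using n3 by auto
  ultimately show "a = a' \<and> e = e'" by simp
qed

lemma injC: "inj_on (\<lambda>(k,e). {{3,k},{1,2},e}) ({7..n}\<times>T2)"
proof (rule inj_onI, clarify)
  fix k e k' e' assume a: "k \<in> {7::nat..n}" "e \<in> T2" "k' \<in> {7..n}" "e' \<in> T2" and eq: "{{3,k},{1,2},e} = {{3,k'},{1,2},e'}"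
  have n3: "3 \<notin> e" "3 \<notin> e'" using a T2_3(1) by auto
  have "{3,k} \<in> {{3,k'},{1,2},e'}" unfolding eq[symmetric] by simp
  moreover have "{3,k} \<noteq> e'" using n3 by auto
  moreover have "{3,k} \<noteq> {1,2}" by auto
  ultimately have "{3,k} = {3,k'}" by simp
  then have "k \<in> {3,k'}" by (metis insertI1 insertI2)
  then have "k = k'" using a(1) by auto
  moreover have "e \<in> {{3,k'},{1,2},e'}" unfolding eq[symmetric] by simp
  moreover have "e \<noteq> {3,k'}" using n3 by auto
  moreover have "e \<noteq> {1,2}" using a(2) T2_3(2) by auto
  ultimately show "k = k' \<and> e = e'" by simp
qed

lemma cardB: "M \<in> (\<lambda>(a,e). {{a,3},e}) ` ({1,2}\<times>T2) \<Longrightarrow> card M = 2"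
proof -
  assume "M \<in> (\<lambda>(a,e). {{a,3},e}) ` ({1,2}\<times>T2)"
  then obtain a e where M: "M = {{a,3},e}" "e \<in> T2" by auto
  have "3 \<notin> e" using M T2_3(1) by auto
  then have "{a,3} \<noteq> e" by auto
  then show ?thesis using M by simp
qed
lemma cardC: "M \<in> (\<lambda>(k,e). {{3,k},{1,2},e}) ` ({7..n}\<times>T2) \<Longrightarrow> card M = 3"
proof -
  assume "M \<in> (\<lambda>(k,e). {{3,k},{1,2},e}) ` ({7..n}\<times>T2)"
  then obtain k e where M: "M = {{3,k},{1,2},e}" "k \<ge> 7" "e \<in> T2" by auto
  have "3 \<notin> e" using M T2_3(1) by auto
  then have "{3,k} \<noteq> e" by auto
  moreover have "{3,k} \<noteq> {1,2}" by auto
  moreover have "{1,2} \<noteq> e" using M T2_3(2) by auto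
  ultimately show ?thesis using M by simp
qed

lemma counts: assumes "n \<ge> 7"
  shows "card (S n) = 3*n - 11" "(\<Sum>M\<in>S n. real (card M)) = 9 * real n - 39"
proof -
  define A where "A = {{{3::nat,4},{1,2},{5,6}}}"
  define B where "B = (\<lambda>(a,e). {{a,3},e}) ` ({1::nat,2}\<times>T2)"
  define C where "C = (\<lambda>(k,e). {{3,k},{1::nat,2},e}) ` ({7..n}\<times>T2)"
  have SD: "S n = B \<union> (A \<union> C)" unfolding S_def A_def B_def C_def by blast
  have fA: "finite A" "finite B" "finite C" unfolding A_def B_def C_def using finT2 by auto
  have cA: "card A = 1" unfolding A_def by simp
  have cB: "card B = 6" unfolding B_def using card_image[OF injB] cardT2 finT2 by (simp add: card_cartesian_product)
  have cC: "card C = 3 * (n - 6)" unfolding C_def using card_image[OF injC] cardT2 finT2 by (simp add: card_cartesian_product)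
  have c3: "\<And>M. M \<in> A \<union> C \<Longrightarrow> card M = 3" unfolding A_def C_def using cardC by (auto simp: doubleton_eq_iff)
  have c2: "\<And>M. M \<in> B \<Longrightarrow> card M = 2" unfolding B_def using cardB by blast
  have dBAC: "B \<inter> (A \<union> C) = {}" using c2 c3 by fastforce
  have dAC: "A \<inter> C = {}"
  proof (rule ccontr)
    assume "A \<inter> C \<noteq> {}"
    then obtain M where MA: "M \<in> A" and MC: "M \<in> C" by blast
    from MA have M1: "M = {{3,4},{1,2},{5,6}}" unfolding A_def by simp
    from MC obtain p where p: "p \<in> {7..n}\<times>T2" "M = (\<lambda>(k,e). {{3,k},{1::nat,2},e}) p" unfolding C_def by (rule imageE)
    obtain k e where ke: "p = (k,e)" by (cases p)
    have k: "k \<ge> 7" "e \<in> T2" using p(1) ke by auto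
    have M2: "M = {{3,k},{1,2},e}" using p(2) ke by simp
    have "{3::nat,4} \<in> M" using M1 by simp
    then have "{3::nat,4} \<in> {{3,k},{1,2},e}" using M2 by simp
    moreover have "4 \<notin> {3,k}" using k by simp
    then have "{3::nat,4} \<noteq> {3,k}" by blast
    moreover have "3 \<notin> e" using k T2_3(1) by blast
    then have "{3::nat,4} \<noteq> e" by blast
    moreover have "3 \<notin> {1,2::nat}" by simp
    then have "{3::nat,4} \<noteq> {1,2}" by blast
    ultimately show False by simp
  qed
  have fAC: "finite (A \<union> C)" using fA by simp
  have cAC: "card (A \<union> C) = 1 + 3*(n-6)" using card_Un_disjoint[OF fA(1,3) dAC] cA cC by simp
  have cS: "card (B \<union> (A \<union> C)) = card B + card (A \<union> C)" by (rule card_Un_disjoint[OF fA(2) fAC dBAC])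
  show "card (S n) = 3*n - 11" unfolding SD cS cB cAC using assms by simp
  have "(\<Sum>M\<in>S n. real (card M)) = (\<Sum>M\<in>B. real (card M)) + (\<Sum>M\<in>A \<union> C. real (card M))"
    unfolding SD by (rule sum.union_disjoint[OF fA(2) fAC dBAC])
  also have "(\<Sum>M\<in>B. real (card M)) = (\<Sum>M\<in>B. 2)" by (rule sum.cong[OF refl]) (simp add: c2)
  also have "(\<Sum>M\<in>A \<union> C. real (card M)) = (\<Sum>M\<in>A \<union> C. 3)" by (rule sum.cong[OF refl]) (simp add: c3)
  also have "(\<Sum>M\<in>B. (2::real)) + (\<Sum>M\<in>A \<union> C. 3) = 9 * real n - 39" unfolding sum_constant cB cAC using assms by (simp add: of_nat_diff)
  finally show "(\<Sum>M\<in>S n. real (card M)) = 9 * real n - 39" .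
qed

theorem lemma4p1:
  fixes n :: nat
  assumes "n \<ge> 7"
  shows "avm (T1_33 n) = 3 - 6 / (3 * real n - 11)"
proof -
  have eq: "{M. maximal_matching (T1_33 n) M} = S n" using S_max max_S assms by blast
  have c: "real (card (S n)) = 3 * real n - 11" using counts(1)[OF assms] assms by (simp add: of_nat_diff)
  have nz: "3 * real n - 11 \<noteq> 0" using assms by simp
  have "avm (T1_33 n) = (9 * real n - 39) / (3 * real n - 11)"
    unfolding avm_def eq counts(2)[OF assms] c ..
  also have "\<dots> = 3 - 6 / (3 * real n - 11)" using nz by (simp add: field_simps)
  finally show ?thesis .
qed

end
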